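(* Let $d\ge 2$ and let $|\psi^{(r)}\rangle_{DA}=\sum_{i=0}^{d-1}\alpha_i|i\rangle_D|i\oplus r\rangle_A$ be a pure state of a dit/anti-dit $(1,1)$-composite ($r\in\{0,\dots,d-1\}$, $\sum_i|\alpha_i|^2=1$) which is entangled, i.e. at least two of the $\alpha_i$ are nonzero. Consider two copies $|\psi^{(r)}\rangle_{D_1A_1}\otimes|\psi^{(r)}\rangle_{D_2A_2}$, with Alice holding $D_1A_2$ and Bob holding $D_2A_1$. Then there exist two-outcome valid measurements $A_0,A_1$ on the $(1,1)$-composite $D_1A_2$ and $B_0,B_1$ on the $(1,1)$-composite $D_2A_1$ whose CHSH value $F=\langle A_0B_0\rangle+\langle A_0B_1\rangle+\langle A_1B_0\rangle-\langle A_1B_1\rangle$ on this state is strictly larger than $2$. Specifically, if $\alpha_0,\alpha_1>0$ are real, set $\alpha'=\alpha_0^2$, $\beta'=\alpha_1^2$, $|{\uparrow}\rangle=|0\rangle_{D_1}|r\rangle_{A_2}$, $|{\downarrow}\rangle=|1\rangle_{D_1}|1\oplus r\rangle_{A_2}$, $|{\uparrow'}\rangle=|0\rangle_{D_2}|r\rangle_{A_1}$, $|{\downarrow'}\rangle=|1\rangle_{D_2}|1\oplus r\rangle_{A_1}$, and $\theta\in(0,\pi/2]$ with $\tan\theta=2\alpha'\beta'/(\alpha'^2+\beta'^2)$; let $A_0,A_1,B_0,B_1$ have $+1$-outcome operators $a_0=|{\uparrow}\rangle\langle{\uparrow}|$, $a_1=\tfrac12(|{\uparrow}\rangle+|{\downarrow}\rangle)(\langle{\uparrow}|+\langle{\downarrow}|)$,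 $b_{0}=\tfrac{1}{2\cos\theta+2}|u_+\rangle\langle u_+|$, $b_1=\tfrac{1}{2\cos\theta+2}|u_-\rangle\langle u_-|$ with $|u_\pm\rangle=(\cos\theta+1)|{\uparrow'}\rangle\pm\sin\theta|{\downarrow'}\rangle$, and $-1$-outcome operators $I-a_x$, $I-b_y$. These are valid measurements and $$F=2+2(\alpha'^2+\beta'^2)\left(\sqrt{1+\frac{4\alpha'^2\beta'^2}{(\alpha'^2+\beta'^2)^2}}-1\right)>2.$$
   Context: Fix an integer $d\ge2$. A dit $D$ and an anti-dit $A$ are each associated with $\mathbb C^d$ with computational orthonormal basis $\{|0\rangle,\dots,|d-1\rangle\}$; $\oplus$ denotes addition modulo $d$. For a dit $D$ and anti-dit $A$ and $k\in\{0,\dots,d-1\}$, the parity-$k$ subspace is $\mathrm{span}\{|s\rangle_D|s\oplus k\rangle_A:s=0,\dots,d-1\}$; the pure states of the $(1,1)$-composite $DA$ are unit vectors lying in a single parity subspace. For two dits $D_1,D_2$ and two anti-dits $A_1,A_2$, pure states are unit vectors of the form $(U\otimes W)|\Psi'\rangle$ with $U$ permuting the dit tensor factors, $W$ permuting the anti-dit tensor factors, and $|\Psi'\rangle$ lying in a single parity subspace of $D_1A_1$ tensored with a single parity subspace of $D_2A_2$. States are convex combinations of projectors onto pure states. A valid measurement on a composite is a POVM whose elements are linear combinations with nonnegative coefficients of projectors onto pure states of that composite; outcome probabilities are $\mathrm{Tr}[P\rho]$. For a two-outcome measurement $X$ with outcomes $\pm1$ for Alice and $Y$ for Bob, $\langle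 XY\rangle=\sum_{a,b=\pm1}ab\,p(a,b\mid X,Y)$. *)

theory Defs
  imports Complex_Main
begin

text \<open>A (1,1)-composite of a dit D and an anti-dit A is modelled on C^d (x) C^d.
  A vector is a function on index pairs (s,t) (s = dit index, t = anti-dit index),
  required to vanish outside {0..<d} x {0..<d}; an operator is a matrix indexed by such pairs.\<close>

type_synonym cvec = "nat \<times> nat \<Rightarrow> complex"
type_synonym cop = "nat \<times> nat \<Rightarrow> nat \<times> nat \<Rightarrow> complex"

definition pure11 :: "nat \<Rightarrow> cvec \<Rightarrow> bool" where
  "pure11 d v \<longleftrightarrow>
     (\<forall>s t. (d \<le> s \<or> d \<le> t) \<longrightarrow> v (s, t) = 0)
   \<and> (\<exists>k<d. \<forall>s<d. \<forall>t<d. t \<noteq> (s + k) mod d \<longrightarrow> v (s, t) = 0)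
   \<and> (\<Sum>s<d. \<Sum>t<d. (cmod (v (s, t)))\<^sup>2) = 1"

definition proj :: "cvec \<Rightarrow> cop" where
  "proj v = (\<lambda>x y. v x * cnj (v y))"

definition idop :: "nat \<Rightarrow> cop" where
  "idop d = (\<lambda>x y. if x = y \<and> fst x < d \<and> snd x < d then 1 else 0)"

definition valid_effect11 :: "nat \<Rightarrow> cop \<Rightarrow> bool" where
  "valid_effect11 d P \<longleftrightarrow>
     (\<exists>(n::nat) (c::nat \<Rightarrow> real) (vs::nat \<Rightarrow> cvec).
        (\<forall>i<n. 0 \<le> c i \<and> pure11 d (vs i))
      \<and> (\<forall>x y. P x y = (\<Sum>i<n. complex_of_real (c i) * proj (vs i) x y)))"

text \<open>Two-outcome valid measurement: pair (effect for +1, effect for -1) forming a POVM.\<close>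
definition valid_meas2 :: "nat \<Rightarrow> cop \<times> cop \<Rightarrow> bool" where
  "valid_meas2 d M \<longleftrightarrow> valid_effect11 d (fst M) \<and> valid_effect11 d (snd M)
     \<and> (\<forall>x y. fst M x y + snd M x y = idop d x y)"

definition psi_r :: "nat \<Rightarrow> nat \<Rightarrow> (nat \<Rightarrow> complex) \<Rightarrow> cvec" where
  "psi_r d r \<alpha> = (\<lambda>(s, t). if s < d \<and> t = (s + r) mod d then \<alpha> s else 0)"

text \<open>Outcome probability Tr[(P (x) Q) rho] for rho the projector onto
  psi_{D1A1} (x) psi_{D2A2}, where P acts on D1A2 (Alice) and Q acts on D2A1 (Bob).\<close>
definition prob2 :: "nat \<Rightarrow> cvec \<Rightarrow> cop \<Rightarrow> cop \<Rightarrow> real" where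
  "prob2 d \<psi> P Q = Re (\<Sum>s1<d. \<Sum>t1<d. \<Sum>s2<d. \<Sum>t2<d.
       \<Sum>s1'<d. \<Sum>t1'<d. \<Sum>s2'<d. \<Sum>t2'<d.
         cnj (\<psi> (s1, t1) * \<psi> (s2, t2)) * P (s1, t2) (s1', t2') * Q (s2, t1) (s2', t1')
         * (\<psi> (s1', t1') * \<psi> (s2', t2')))"

definition corr :: "nat \<Rightarrow> cvec \<Rightarrow> cop \<times> cop \<Rightarrow> cop \<times> cop \<Rightarrow> real" where
  "corr d \<psi> A B = prob2 d \<psi> (fst A) (fst B) - prob2 d \<psi> (fst A) (snd B)
                 - prob2 d \<psi> (snd A) (fst B) + prob2 d \<psi> (snd A) (snd B)"

definition chsh :: "nat \<Rightarrow> cvec \<Rightarrow> cop \<times> cop \<Rightarrow> cop \<times> cop \<Rightarrow> cop \<times> cop \<Rightarrow> cop \<times> cop \<Rightarrow> real" where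
  "chsh d \<psi> A0 A1 B0 B1 = corr d \<psi> A0 B0 + corr d \<psi> A0 B1 + corr d \<psi> A1 B0 - corr d \<psi> A1 B1"

definition ket :: "nat \<times> nat \<Rightarrow> cvec" where
  "ket x = (\<lambda>y. if y = x then 1 else 0)"

definition opsub :: "cop \<Rightarrow> cop \<Rightarrow> cop" where
  "opsub P Q = (\<lambda>x y. P x y - Q x y)"

definition opscale :: "real \<Rightarrow> cop \<Rightarrow> cop" where
  "opscale c P = (\<lambda>x y. complex_of_real c * P x y)"

end

theory Submission imports Defs begin

lemma if0_mult_l: "(if c then a else 0) * (b::complex) = (if c then a*b else 0)" by simp
lemma if0_mult_r: "(b::complex) * (if c then a else 0) = (if c then b*a else 0)" by simp
lemma if0_cnj: "cnj (if c then a else 0) = (if c then cnj a else 0)" by simp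
lemma sum_if0_const: "(\<Sum>x\<in>A. if c then f x else (0::'a::comm_monoid_add)) = (if c then \<Sum>x\<in>A. f x else 0)" by simp
lemma if0_conj: "(if A \<and> B then x else (0::'a::zero)) = (if A then if B then x else 0 else 0)" by simp

lemma psi_eq: "s < d \<Longrightarrow> psi_r d r \<alpha> (s,t) = (if t = (s+r) mod d then \<alpha> s else 0)"
  by (simp add: psi_r_def)

lemma prob2_psi:
  assumes "0 < d"
  shows "prob2 d (psi_r d r \<alpha>) P Q = Re (\<Sum>s1<d. \<Sum>s2<d. \<Sum>s1'<d. \<Sum>s2'<d.
     cnj (\<alpha> s1 * \<alpha> s2) * P (s1, (s2+r) mod d) (s1', (s2'+r) mod d) * Q (s2, (s1+r) mod d) (s2', (s1'+r) mod d)
     * (\<alpha> s1' * \<alpha> s2'))"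
  unfolding prob2_def
  by (simp add: psi_eq assms if0_mult_l if0_mult_r if0_cnj sum_if0_const cong: if_cong)

lemma tau_inj: "(a::nat) < d \<Longrightarrow> b < d \<Longrightarrow> r < d \<Longrightarrow> ((a+r) mod d = (b+r) mod d) = (a = b)"
proof
  assume h: "a < d" "b < d" "r < d" "(a+r) mod d = (b+r) mod d"
  have "(a + r + (d - r)) mod d = (b + r + (d - r)) mod d" using h(4) by (metis mod_add_left_eq)
  then have "(a + d) mod d = (b + d) mod d" using h(3) by simp
  then show "a = b" using h by simp
qed simp

definition vec2 :: "nat \<Rightarrow> nat \<Rightarrow> nat \<Rightarrow> nat \<Rightarrow> complex \<Rightarrow> complex \<Rightarrow> cvec" where
  "vec2 d r i j c1 c2 = (\<lambda>x. c1 * ket (i, (i+r) mod d) x + c2 * ket (j, (j+r) mod d) x)"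

lemma vec2_at:
  assumes "s < d" "t < d" "i < d" "j < d" "r < d"
  shows "vec2 d r i j c1 c2 (s, (t+r) mod d) = (if s = i \<and> t = i then c1 else 0) + (if s = j \<and> t = j then c2 else 0)"
  using assms by (auto simp: vec2_def ket_def tau_inj)

lemma swap4: "(\<Sum>a\<in>A. \<Sum>b\<in>B. \<Sum>c\<in>C. \<Sum>e\<in>E. F a b c e) = (\<Sum>a\<in>A. \<Sum>c\<in>C. \<Sum>b\<in>B. \<Sum>e\<in>E. F a b c e)"
  by (rule sum.cong[OF refl], rule sum.swap)

lemma prob2_proj:
  assumes "0 < d"
  shows "prob2 d (psi_r d r \<alpha>) (proj v) (proj w) =
    (cmod (\<Sum>s1<d. \<Sum>s2<d. cnj (\<alpha> s1 * \<alpha> s2) * v (s1, (s2+r) mod d) * w (s2, (s1+r) mod d)))\<^sup>2"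
proof -
  define z where "z = (\<Sum>s1<d. \<Sum>s2<d. cnj (\<alpha> s1 * \<alpha> s2) * v (s1, (s2+r) mod d) * w (s2, (s1+r) mod d))"
  have "z * cnj z = (\<Sum>s1<d. \<Sum>s2<d. \<Sum>s1'<d. \<Sum>s2'<d.
     cnj (\<alpha> s1 * \<alpha> s2) * proj v (s1, (s2+r) mod d) (s1', (s2'+r) mod d) * proj w (s2, (s1+r) mod d) (s2', (s1'+r) mod d)
     * (\<alpha> s1' * \<alpha> s2'))"
    unfolding z_def proj_def
    apply (simp add: sum_distrib_left sum_distrib_right mult_ac)
    apply (subst swap4)
    apply (simp add: mult_ac)
    done
  moreover have "Re (z * cnj z) = (cmod z)\<^sup>2"
    by (simp add: complex_mult_cnj cmod_power2)
  ultimately show ?thesis using prob2_psi[OF assms, of r \<alpha> "proj v" "proj w"] unfolding z_def by simp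
qed

lemma sum_vec2:
  assumes "i < d" "j < d" "r < d" "i \<noteq> j"
  shows "(\<Sum>s1<d. \<Sum>s2<d. cnj (\<alpha> s1 * \<alpha> s2) * vec2 d r i j c1 c2 (s1, (s2+r) mod d) * vec2 d r i j e1 e2 (s2, (s1+r) mod d))
    = cnj (\<alpha> i * \<alpha> i) * c1 * e1 + cnj (\<alpha> j * \<alpha> j) * c2 * e2"
  using assms
  by (simp add: vec2_at distrib_left distrib_right if0_mult_l if0_mult_r if0_conj sum.distrib sum_if0_const cong: if_cong)

lemma prob2_vec2:
  assumes "i < d" "j < d" "r < d" "i \<noteq> j"
  shows "prob2 d (psi_r d r \<alpha>) (proj (vec2 d r i j c1 c2)) (proj (vec2 d r i j e1 e2))
    = (cmod (cnj (\<alpha> i * \<alpha> i) * c1 * e1 + cnj (\<alpha> j * \<alpha> j) * c2 * e2))\<^sup>2"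
proof -
  have "0 < d" using assms by simp
  then show ?thesis by (simp only: prob2_proj sum_vec2[OF assms])
qed

lemma idop_at:
  assumes "s < d" "t < d" "s' < d" "t' < d" "r < d"
  shows "idop d (s, (t+r) mod d) (s', (t'+r) mod d) = (if s = s' then if t = t' then 1 else 0 else 0)"
  using assms by (simp add: idop_def tau_inj)

lemma prob2_idop_vec2:
  assumes "i < d" "j < d" "r < d" "i \<noteq> j"
  shows "prob2 d (psi_r d r \<alpha>) (idop d) (proj (vec2 d r i j e1 e2))
    = Re (cnj (\<alpha> i * \<alpha> i) * (\<alpha> i * \<alpha> i) * (e1 * cnj e1) + cnj (\<alpha> j * \<alpha> j) * (\<alpha> j * \<alpha> j) * (e2 * cnj e2))"
  using assms
  by (simp add: prob2_psi idop_at proj_def vec2_at distrib_left distrib_right if0_mult_l if0_mult_r if0_cnj if0_conj sum.distrib sum_if0_const mult_ac cong: if_cong)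

lemma prob2_vec2_idop:
  assumes "i < d" "j < d" "r < d" "i \<noteq> j"
  shows "prob2 d (psi_r d r \<alpha>) (proj (vec2 d r i j e1 e2)) (idop d)
    = Re (cnj (\<alpha> i * \<alpha> i) * (\<alpha> i * \<alpha> i) * (e1 * cnj e1) + cnj (\<alpha> j * \<alpha> j) * (\<alpha> j * \<alpha> j) * (e2 * cnj e2))"
  using assms
  by (simp add: prob2_psi idop_at proj_def vec2_at distrib_left distrib_right if0_mult_l if0_mult_r if0_cnj if0_conj sum.distrib sum_if0_const mult_ac cong: if_cong)

lemma cnj_mult_self: "cnj z * z = complex_of_real ((cmod z)\<^sup>2)"
  by (metis complex_norm_square mult.commute)

lemma prob2_idop_idop:
  assumes "0 < d" "r < d"
  shows "prob2 d (psi_r d r \<alpha>) (idop d) (idop d) = (\<Sum>i<d. (cmod (\<alpha> i))\<^sup>2)\<^sup>2"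
proof -
  have "prob2 d (psi_r d r \<alpha>) (idop d) (idop d) = Re (\<Sum>s1<d. \<Sum>s2<d. (cnj (\<alpha> s1) * \<alpha> s1) * (cnj (\<alpha> s2) * \<alpha> s2))"
    using assms by (simp add: prob2_psi idop_at if0_mult_l if0_mult_r sum_if0_const mult_ac cong: if_cong)
  also have "\<dots> = (\<Sum>i<d. (cmod (\<alpha> i))\<^sup>2)\<^sup>2"
  proof -
    have "(\<Sum>i<d. (cmod (\<alpha> i))\<^sup>2)\<^sup>2 = (\<Sum>s1<d. \<Sum>s2<d. (cmod (\<alpha> s1))\<^sup>2 * (cmod (\<alpha> s2))\<^sup>2)"
      by (metis power2_eq_square sum_product)
    then show ?thesis by (simp add: cnj_mult_self Re_sum)
  qed
  finally show ?thesis .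
qed

lemma prob2_sub_l: "prob2 d \<psi> (opsub P P') Q = prob2 d \<psi> P Q - prob2 d \<psi> P' Q"
  unfolding prob2_def opsub_def by (simp add: left_diff_distrib right_diff_distrib sum_subtractf)

lemma prob2_sub_r: "prob2 d \<psi> P (opsub Q Q') = prob2 d \<psi> P Q - prob2 d \<psi> P Q'"
  unfolding prob2_def opsub_def by (simp add: left_diff_distrib right_diff_distrib sum_subtractf)

lemma corr_form: "corr d \<psi> (P, opsub (idop d) P) (Q, opsub (idop d) Q) =
   4 * prob2 d \<psi> P Q - 2 * prob2 d \<psi> P (idop d) - 2 * prob2 d \<psi> (idop d) Q + prob2 d \<psi> (idop d) (idop d)"
  unfolding corr_def by (simp add: prob2_sub_l prob2_sub_r)

lemma opscale_vec2:
  assumes "0 \<le> c"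
  shows "opscale c (proj (vec2 d r i j c1 c2)) = proj (vec2 d r i j (complex_of_real (sqrt c) * c1) (complex_of_real (sqrt c) * c2))"
proof -
  have "complex_of_real c = complex_of_real (sqrt c) * cnj (complex_of_real (sqrt c))"
    using assms by (simp flip: of_real_mult)
  then show ?thesis unfolding opscale_def proj_def vec2_def
    by (intro ext) (simp add: algebra_simps)
qed

lemma valid_effect11_finite:
  fixes K :: "'a set" and c :: "'a \<Rightarrow> real" and v :: "'a \<Rightarrow> cvec"
  assumes "finite K" "\<forall>k\<in>K. 0 \<le> c k \<and> pure11 d (v k)"
    "\<forall>x y. P x y = (\<Sum>k\<in>K. complex_of_real (c k) * proj (v k) x y)"
  shows "valid_effect11 d P"
proof -
  obtain h where h: "bij_betw h {0..<card K} K" using ex_bij_betw_nat_finite[OF assms(1)] by blast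
  have hK: "\<forall>i<card K. h i \<in> K" using h bij_betwE by fastforce
  have "\<forall>x y. P x y = (\<Sum>i<card K. complex_of_real ((c \<circ> h) i) * proj ((v \<circ> h) i) x y)"
  proof (intro allI)
    fix x y
    have "(\<Sum>i<card K. complex_of_real ((c \<circ> h) i) * proj ((v \<circ> h) i) x y)
        = (\<Sum>k\<in>K. complex_of_real (c k) * proj (v k) x y)"
      using sum.reindex_bij_betw[OF h, of "\<lambda>k. complex_of_real (c k) * proj (v k) x y"]
      by (simp add: lessThan_atLeast0)
    moreover have "P x y = (\<Sum>k\<in>K. complex_of_real (c k) * proj (v k) x y)" using assms(3) by blast
    ultimately show "P x y = (\<Sum>i<card K. complex_of_real ((c \<circ> h) i) * proj ((v \<circ> h) i) x y)"
      by simp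
  qed
  moreover have "\<forall>i<card K. 0 \<le> (c \<circ> h) i \<and> pure11 d ((v \<circ> h) i)" using hK assms(2) by simp
  ultimately show ?thesis unfolding valid_effect11_def by blast
qed

lemma pure_ket:
  assumes "fst z < d" "snd z < d"
  shows "pure11 d (ket z)"
proof -
  obtain s0 t0 where z: "z = (s0, t0)" by (cases z)
  have s0: "s0 < d" "t0 < d" using assms z by auto
  define k where "k = (t0 + d - s0) mod d"
  have "(s0 + k) mod d = (s0 + (t0 + d - s0)) mod d" unfolding k_def by (simp add: mod_add_right_eq)
  also have "\<dots> = t0" using s0 by simp
  finally have kk: "(s0 + k) mod d = t0" .
  have "k < d" using s0 unfolding k_def by simp
  moreover have "\<forall>s<d. \<forall>t<d. t \<noteq> (s + k) mod d \<longrightarrow> ket z (s, t) = 0"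
    using kk z by (auto simp: ket_def)
  moreover have "(\<Sum>s<d. \<Sum>t<d. (cmod (ket z (s, t)))\<^sup>2) = 1"
  proof -
    have "\<And>s t. (cmod (ket z (s, t)))\<^sup>2 = (if s = s0 then if t = t0 then 1 else 0 else 0)"
      by (simp add: ket_def z)
    then show ?thesis using s0 by (simp add: sum_if0_const)
  qed
  moreover have "\<forall>s t. (d \<le> s \<or> d \<le> t) \<longrightarrow> ket z (s, t) = 0" using s0 z by (auto simp: ket_def)
  ultimately show ?thesis unfolding pure11_def by blast
qed

lemma pure_vec2:
  assumes "i < d" "j < d" "r < d" "i \<noteq> j" "(cmod c1)\<^sup>2 + (cmod c2)\<^sup>2 = 1"
  shows "pure11 d (vec2 d r i j c1 c2)"
proof -
  have d0: "0 < d" using assms by simp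
  have ij: "(i + r) mod d < d" "(j + r) mod d < d" using assms by auto
  have a: "\<forall>s t. (d \<le> s \<or> d \<le> t) \<longrightarrow> vec2 d r i j c1 c2 (s, t) = 0"
    using assms apply (auto simp: vec2_def ket_def) using ij by linarith+
  have b: "\<forall>s<d. \<forall>t<d. t \<noteq> (s + r) mod d \<longrightarrow> vec2 d r i j c1 c2 (s, t) = 0"
    by (auto simp: vec2_def ket_def)
  have nij: "(i + r) mod d \<noteq> (j + r) mod d" using assms tau_inj by simp
  have "\<And>s t. (cmod (vec2 d r i j c1 c2 (s, t)))\<^sup>2 =
      (if s = i then if t = (i + r) mod d then (cmod c1)\<^sup>2 else 0 else 0)
    + (if s = j then if t = (j + r) mod d then (cmod c2)\<^sup>2 else 0 else 0)"
    using assms by (auto simp: vec2_def ket_def)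
  then have c: "(\<Sum>s<d. \<Sum>t<d. (cmod (vec2 d r i j c1 c2 (s, t)))\<^sup>2) = 1"
    using assms ij by (simp add: sum.distrib sum_if0_const)
  show ?thesis unfolding pure11_def using a b c assms by blast
qed

lemma valid_proj_pure: "pure11 d v \<Longrightarrow> valid_effect11 d (proj v)"
  unfolding valid_effect11_def
  by (rule exI[of _ 1], rule exI[of _ "\<lambda>_. 1"], rule exI[of _ "\<lambda>_. v"]) simp

lemma ket_sum:
  assumes "finite Kb"
  shows "(\<Sum>z\<in>Kb. proj (ket z) x y) = (if x = y \<and> x \<in> Kb then 1 else 0)"
proof -
  have "\<And>z. proj (ket z) x y = (if x = z then (if x = y then 1 else 0) else 0)"
    by (auto simp: proj_def ket_def)
  then show ?thesis using assms by simp
qed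

lemma proj_pair:
  assumes "(cmod c1)\<^sup>2 + (cmod c2)\<^sup>2 = 1" "ei \<noteq> ej"
  shows "c1 * ket ei x * cnj (c1 * ket ei y) + c2 * ket ej x * cnj (c2 * ket ej y)
     + c1 * ket ei x * cnj (c2 * ket ej y) + c2 * ket ej x * cnj (c1 * ket ei y)
     + ((- cnj c2) * ket ei x * cnj ((- cnj c2) * ket ei y) + cnj c1 * ket ej x * cnj (cnj c1 * ket ej y)
     + (- cnj c2) * ket ei x * cnj (cnj c1 * ket ej y) + cnj c1 * ket ej x * cnj ((- cnj c2) * ket ei y))
     = (if x = y \<and> (x = ei \<or> x = ej) then 1 else 0)"
proof -
  have h: "c1 * cnj c1 + c2 * cnj c2 = 1"
  proof -
    have "complex_of_real ((cmod c1)\<^sup>2 + (cmod c2)\<^sup>2) = 1" using assms by simp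
    then show ?thesis by (simp only: of_real_add complex_norm_square)
  qed
  have h2: "cnj c2 * c2 + c1 * cnj c1 = 1" using h by (simp add: mult.commute add.commute)
  have h3: "cnj c1 * c1 + c2 * cnj c2 = 1" using h by (simp add: mult.commute add.commute)
  show ?thesis using assms h h2 h3 by (auto simp: ket_def algebra_simps)
qed

lemma proj_vec2_pair:
  assumes "(cmod c1)\<^sup>2 + (cmod c2)\<^sup>2 = 1" "i < d" "j < d" "r < d" "i \<noteq> j"
  shows "proj (vec2 d r i j c1 c2) x y + proj (vec2 d r i j (- cnj c2) (cnj c1)) x y
     = (if x = y \<and> (x = (i, (i+r) mod d) \<or> x = (j, (j+r) mod d)) then 1 else 0)"
  using proj_pair[OF assms(1), of "(i, (i+r) mod d)" "(j, (j+r) mod d)" x y] assms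
  unfolding proj_def vec2_def by (simp add: algebra_simps)

lemma meas_vec2:
  assumes "(cmod c1)\<^sup>2 + (cmod c2)\<^sup>2 = 1" "i < d" "j < d" "r < d" "i \<noteq> j"
  shows "valid_meas2 d (proj (vec2 d r i j c1 c2), opsub (idop d) (proj (vec2 d r i j c1 c2)))"
proof -
  define ei where "ei = (i, (i+r) mod d)"
  define ej where "ej = (j, (j+r) mod d)"
  define Kb where "Kb = ({..<d} \<times> {..<d}) - {ei, ej}"
  define v where "v = (\<lambda>k. case k of None \<Rightarrow> vec2 d r i j (- cnj c2) (cnj c1) | Some z \<Rightarrow> ket z)"
  have d0: "0 < d" using assms by simp
  have fin: "finite Kb" unfolding Kb_def by simp
  have n2: "(cmod (- cnj c2))\<^sup>2 + (cmod (cnj c1))\<^sup>2 = 1" using assms(1) by simp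
  have pv: "\<forall>k\<in>insert None (Some ` Kb). 0 \<le> (1::real) \<and> pure11 d (v k)"
    using pure_vec2[OF assms(2-5) n2] by (auto simp: v_def Kb_def intro!: pure_ket)
  have eq: "\<forall>x y. opsub (idop d) (proj (vec2 d r i j c1 c2)) x y
      = (\<Sum>k\<in>insert None (Some ` Kb). complex_of_real 1 * proj (v k) x y)"
  proof (intro allI)
    fix x y
    have "(\<Sum>k\<in>insert None (Some ` Kb). complex_of_real 1 * proj (v k) x y)
        = proj (vec2 d r i j (- cnj c2) (cnj c1)) x y + (\<Sum>z\<in>Kb. proj (ket z) x y)"
      using fin by (simp add: v_def sum.reindex)
    also have "\<dots> = proj (vec2 d r i j (- cnj c2) (cnj c1)) x y + (if x = y \<and> x \<in> Kb then 1 else 0)"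
      using ket_sum[OF fin] by simp
    finally have 1: "(\<Sum>k\<in>insert None (Some ` Kb). complex_of_real 1 * proj (v k) x y)
        = proj (vec2 d r i j (- cnj c2) (cnj c1)) x y + (if x = y \<and> x \<in> Kb then 1 else 0)" .
    have 2: "proj (vec2 d r i j c1 c2) x y + proj (vec2 d r i j (- cnj c2) (cnj c1)) x y
     = (if x = y \<and> (x = ei \<or> x = ej) then 1 else 0)"
      using proj_vec2_pair[OF assms] unfolding ei_def ej_def .
    have ein: "fst ei < d" "snd ei < d" "fst ej < d" "snd ej < d" using assms d0 by (auto simp: ei_def ej_def)
    have 3: "idop d x y = (if x = y \<and> (x = ei \<or> x = ej) then 1 else 0) + (if x = y \<and> x \<in> Kb then 1 else 0)"
      using ein by (cases x, cases y) (auto simp: idop_def Kb_def)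
    show "opsub (idop d) (proj (vec2 d r i j c1 c2)) x y
      = (\<Sum>k\<in>insert None (Some ` Kb). complex_of_real 1 * proj (v k) x y)"
      unfolding 1 opsub_def using 2 3 by (simp add: algebra_simps)
  qed
  have "valid_effect11 d (opsub (idop d) (proj (vec2 d r i j c1 c2)))"
    by (rule valid_effect11_finite[OF _ pv eq]) (simp add: fin)
  moreover have "valid_effect11 d (proj (vec2 d r i j c1 c2))"
    by (rule valid_proj_pure[OF pure_vec2[OF assms(2-5) assms(1)]])
  ultimately show ?thesis unfolding valid_meas2_def opsub_def by simp
qed

lemma chsh_from:
  "chsh d \<psi> (P0, opsub (idop d) P0) (P1, opsub (idop d) P1) (Q0, opsub (idop d) Q0) (Q1, opsub (idop d) Q1)
   = 4 * (prob2 d \<psi> P0 Q0 + prob2 d \<psi> P0 Q1 + prob2 d \<psi> P1 Q0 - prob2 d \<psi> P1 Q1)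
     - 4 * prob2 d \<psi> P0 (idop d) - 4 * prob2 d \<psi> (idop d) Q0
     + 2 * prob2 d \<psi> (idop d) (idop d)"
  unfolding chsh_def corr_form by simp

lemma cmod_diff_sq: "(cmod (u + v))\<^sup>2 - (cmod (u - v))\<^sup>2 = 4 * Re (u * cnj v)"
  by (simp only: cmod_power2) (simp add: power2_eq_square algebra_simps)

lemma cnjsq: "cnj (z*z) * (z*z) = complex_of_real (cmod z ^ 4)"
proof -
  have "cmod z ^ 4 = (cmod (z*z))^2" by (simp add: norm_mult power_mult_distrib flip: power_add)
  then show ?thesis using cnj_mult_self[of "z*z"] by simp
qed

lemma e_cnj: "e * cnj e = complex_of_real ((cmod e)^2)"
  by (metis complex_norm_square)

lemma Re_ofr: "Re (complex_of_real x * z) = x * Re z" by simp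

lemma chsh_gen:
  fixes C S :: real and \<omega> :: complex
  assumes "i < d" "j < d" "r < d" "i \<noteq> j" "(\<Sum>s<d. (cmod (\<alpha> s))\<^sup>2) = 1"
    "C\<^sup>2 + S\<^sup>2 = 1" "0 < C + 1" "cmod \<omega> = 1"
  defines "g \<equiv> sqrt (1 / (2 * C + 2))" and "h \<equiv> sqrt (1/2)"
  defines "P0 \<equiv> proj (vec2 d r i j 1 0)"
    and "P1 \<equiv> proj (vec2 d r i j (complex_of_real h) (complex_of_real h))"
    and "Q0 \<equiv> proj (vec2 d r i j (complex_of_real (g * (C + 1))) (complex_of_real (g * S) * \<omega>))"
    and "Q1 \<equiv> proj (vec2 d r i j (complex_of_real (g * (C + 1))) (- (complex_of_real (g * S) * \<omega>)))"
  shows "chsh d (psi_r d r \<alpha>) (P0, opsub (idop d) P0) (P1, opsub (idop d) P1) (Q0, opsub (idop d) Q0) (Q1, opsub (idop d) Q1)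
     = 2 - 2 * ((cmod (\<alpha> i))^4 + (cmod (\<alpha> j))^4) + 2 * C * ((cmod (\<alpha> i))^4 + (cmod (\<alpha> j))^4)
       + 4 * S * Re (cnj (\<alpha> i * \<alpha> i) * (\<alpha> j * \<alpha> j) * cnj \<omega>)"
proof -
  let ?p = "prob2 d (psi_r d r \<alpha>)"
  define A4 where "A4 = (cmod (\<alpha> i))^4"
  define B4 where "B4 = (cmod (\<alpha> j))^4"
  define Z where "Z = cnj (\<alpha> i * \<alpha> i) * (\<alpha> j * \<alpha> j) * cnj \<omega>"
  define R where "R = Re Z"
  have d0: "0 < d" using assms by simp
  have g2: "g^2 = 1 / (2 * C + 2)" unfolding g_def using assms(7) by simp
  have h2: "h^2 = 1/2" unfolding h_def by simp
  have nX: "cmod (cnj (\<alpha> i * \<alpha> i)) ^ 2 = A4" unfolding A4_def by (simp add: norm_mult power_mult_distrib flip: power_add)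
  have p00: "?p P0 Q0 = A4 * (g * (C + 1))^2"
    unfolding P0_def Q0_def using prob2_vec2[OF assms(1-4)] nX
    by (simp add: norm_mult power_mult_distrib)
  have p01: "?p P0 Q1 = A4 * (g * (C + 1))^2"
    unfolding P0_def Q1_def using prob2_vec2[OF assms(1-4)] nX
    by (simp add: norm_mult power_mult_distrib)
  have p10p11: "?p P1 Q0 - ?p P1 Q1 = 4 * h^2 * g^2 * (C + 1) * S * R"
  proof -
    have "?p P1 Q0 - ?p P1 Q1 = 4 * Re ((cnj (\<alpha> i * \<alpha> i) * complex_of_real h * complex_of_real (g * (C + 1)))
        * cnj (cnj (\<alpha> j * \<alpha> j) * complex_of_real h * (complex_of_real (g * S) * \<omega>)))"
      unfolding P1_def Q0_def Q1_def prob2_vec2[OF assms(1-4)] cmod_diff_sq[symmetric]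
      by (simp add: algebra_simps)
    also have "\<dots> = 4 * Re (complex_of_real (h*h*g*g*(C+1)*S) * Z)"
      unfolding Z_def by (simp only: complex_cnj_mult complex_cnj_cnj complex_cnj_complex_of_real of_real_mult mult_ac)
    also have "\<dots> = 4 * h^2 * g^2 * (C + 1) * S * R"
      unfolding R_def Re_ofr by (simp add: power2_eq_square mult_ac)
    finally show ?thesis .
  qed
  have pA0: "?p P0 (idop d) = A4"
    unfolding P0_def prob2_vec2_idop[OF assms(1-4)] A4_def cnjsq
    by simp
  have pB0: "?p (idop d) Q0 = A4 * (g * (C + 1))^2 + B4 * (g * S)^2"
    unfolding Q0_def prob2_idop_vec2[OF assms(1-4)] A4_def B4_def cnjsq e_cnj
    using assms(8) by (simp add: norm_mult power_mult_distrib)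
  have pII: "?p (idop d) (idop d) = 1"
    using prob2_idop_idop[OF d0 assms(3)] assms(5) by simp
  have e1: "(g*(C+1))^2 = (C+1)/2"
  proof -
    have "(g*(C+1))^2 = (C+1)^2 / (2*C+2)" by (simp add: power_mult_distrib g2)
    also have "\<dots> = (C+1)/2" using assms(7) by (simp add: field_simps power2_eq_square)
    finally show ?thesis .
  qed
  have e2: "(g*S)^2 = (1-C)/2"
  proof -
    have "S^2 = (1 - C) * (1 + C)" using assms(6) by (simp add: algebra_simps power2_eq_square)
    then have "(g*S)^2 = (1 - C) * (1 + C) / (2*C+2)" by (simp add: power_mult_distrib g2)
    also have "\<dots> = (1-C)/2" using assms(7) by (simp add: field_simps)
    finally show ?thesis .
  qed
  have gC: "g^2 * (C + 1) = 1/2" using g2 assms(7) by (simp add: field_simps)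
  have "4 * h^2 * g^2 * (C + 1) * S * R = 4 * h^2 * (g^2 * (C + 1)) * S * R" by (simp add: mult_ac)
  also have "\<dots> = S * R" unfolding gC h2 by simp
  finally have e3: "4 * h^2 * g^2 * (C + 1) * S * R = S * R" .
  have "chsh d (psi_r d r \<alpha>) (P0, opsub (idop d) P0) (P1, opsub (idop d) P1) (Q0, opsub (idop d) Q0) (Q1, opsub (idop d) Q1)
     = 4 * (?p P0 Q0 + ?p P0 Q1 + (?p P1 Q0 - ?p P1 Q1)) - 4 * ?p P0 (idop d) - 4 * ?p (idop d) Q0 + 2 * ?p (idop d) (idop d)"
    unfolding chsh_from by simp
  also have "\<dots> = 2 - 2 * (A4 + B4) + 2 * C * (A4 + B4) + 4 * S * R"
    unfolding p00 p01 p10p11 pA0 pB0 pII e1 e2 e3 by (simp add: field_simps)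
  finally show ?thesis unfolding A4_def B4_def R_def Z_def .
qed

lemma valid_gen:
  fixes C S :: real and \<omega> :: complex
  assumes "i < d" "j < d" "r < d" "i \<noteq> j"
    "C\<^sup>2 + S\<^sup>2 = 1" "0 < C + 1" "cmod \<omega> = 1"
  defines "g \<equiv> sqrt (1 / (2 * C + 2))" and "h \<equiv> sqrt (1/2)"
  defines "P0 \<equiv> proj (vec2 d r i j 1 0)"
    and "P1 \<equiv> proj (vec2 d r i j (complex_of_real h) (complex_of_real h))"
    and "Q0 \<equiv> proj (vec2 d r i j (complex_of_real (g * (C + 1))) (complex_of_real (g * S) * \<omega>))"
    and "Q1 \<equiv> proj (vec2 d r i j (complex_of_real (g * (C + 1))) (- (complex_of_real (g * S) * \<omega>)))"
  shows "valid_meas2 d (P0, opsub (idop d) P0) \<and> valid_meas2 d (P1, opsub (idop d) P1)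
    \<and> valid_meas2 d (Q0, opsub (idop d) Q0) \<and> valid_meas2 d (Q1, opsub (idop d) Q1)"
proof -
  have g2: "g^2 = 1 / (2 * C + 2)" unfolding g_def using assms(6) by simp
  have h2: "h^2 = 1/2" unfolding h_def by simp
  have n0: "(cmod (complex_of_real (g * (C + 1))))\<^sup>2 + (cmod (complex_of_real (g * S) * \<omega>))\<^sup>2 = 1"
  proof -
    have "(cmod (complex_of_real (g * (C + 1))))\<^sup>2 + (cmod (complex_of_real (g * S) * \<omega>))\<^sup>2
       = g^2 * ((C+1)^2 + S^2)" using assms(7) by (simp only: norm_of_real norm_mult) (simp add: power_mult_distrib power2_eq_square algebra_simps)
    also have "\<dots> = (2*C + 2) / (2 * C + 2)"
    proof -
      have "(C+1)^2 + S^2 = 2*C+2" using assms(5) by (simp add: power2_eq_square algebra_simps)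
      then show ?thesis unfolding g2 by simp
    qed
    also have "\<dots> = 1" using assms(6) by simp
    finally show ?thesis .
  qed
  have n1: "(cmod (complex_of_real (g * (C + 1))))\<^sup>2 + (cmod (- (complex_of_real (g * S) * \<omega>)))\<^sup>2 = 1"
    using n0 by simp
  have nh: "(cmod (complex_of_real h))\<^sup>2 + (cmod (complex_of_real h))\<^sup>2 = 1" using h2 by simp
  show ?thesis unfolding P0_def P1_def Q0_def Q1_def
    using meas_vec2[OF _ assms(1-4)] n0 n1 nh by simp
qed



lemma trig_part:
  fixes ap bp \<theta> :: real
  assumes "0<ap" "0<bp" "0<\<theta>" "\<theta> \<le> pi/2" "tan \<theta> = 2*ap*bp/(ap^2+bp^2)"
  shows "2 - 2*(ap^2+bp^2) + 2*cos \<theta>*(ap^2+bp^2) + 4*sin \<theta>*(ap*bp)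
       = 2 + 2*(ap^2+bp^2)*(sqrt(1 + 4*ap^2*bp^2/(ap^2+bp^2)^2) - 1)
    \<and> 2 + 2*(ap^2+bp^2)*(sqrt(1 + 4*ap^2*bp^2/(ap^2+bp^2)^2) - 1) > 2"
proof -
  define N where "N = ap^2+bp^2"
  define M where "M = 2*ap*bp"
  define t where "t = M/N"
  define q where "q = sqrt (1 + t^2)"
  have N0: "N > 0" unfolding N_def using assms by (simp add: add_pos_pos)
  have M0: "M > 0" unfolding M_def using assms by simp
  have t0: "t > 0" unfolding t_def using N0 M0 by simp
  have tan: "tan \<theta> = t" using assms(5) unfolding t_def M_def N_def by simp
  have cne: "cos \<theta> \<noteq> 0"
  proof
    assume "cos \<theta> = 0"
    then have "tan \<theta> = 0" by (simp add: tan_def)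
    then show False using tan t0 by simp
  qed
  have cge: "cos \<theta> \<ge> 0" using assms(3,4) by (intro cos_ge_zero) auto
  have C0: "cos \<theta> > 0" using cne cge by simp
  have S: "sin \<theta> = t * cos \<theta>" using tan cne by (simp add: tan_def field_simps)
  have "(cos \<theta>)^2 * (1 + t^2) = 1"
    using sin_cos_squared_add[of \<theta>] S by (simp add: algebra_simps power_mult_distrib)
  then have qC2: "(q * cos \<theta>)^2 = 1" unfolding q_def by (simp add: power_mult_distrib mult.commute)
  have qpos: "q > 0" unfolding q_def by (simp add: add_pos_nonneg)
  have qC: "q * cos \<theta> = 1"
  proof -
    have "q * cos \<theta> > 0" using qpos C0 by simp
    then show ?thesis using qC2 power2_eq_1_iff[of "q * cos \<theta>"] by auto
  qed
  have t2: "4*ap^2*bp^2/(ap^2+bp^2)^2 = t^2" unfolding t_def M_def N_def by (simp add: power_divide power_mult_distrib)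
  have q1: "q > 1" unfolding q_def using t0 by simp
  have "2 - 2*N + 2*cos \<theta>*N + 4*sin \<theta>*(ap*bp) = 2 - 2*N + 2*N*(q*cos \<theta>)*q"
  proof -
    have "4*sin \<theta>*(ap*bp) = 2 * cos \<theta> * N * t^2"
      unfolding S using N0 by (simp add: t_def M_def power2_eq_square field_simps)
    then have "2 - 2*N + 2*cos \<theta>*N + 4*sin \<theta>*(ap*bp) = 2 - 2*N + 2*cos \<theta>*N*(1 + t^2)"
      by (simp add: algebra_simps)
    also have "1 + t^2 = q^2" unfolding q_def by simp
    finally show ?thesis by (simp add: algebra_simps power2_eq_square)
  qed
  also have "\<dots> = 2 + 2*N*(q - 1)" unfolding qC by (simp add: algebra_simps)
  finally have F: "2 - 2*N + 2*cos \<theta>*N + 4*sin \<theta>*(ap*bp) = 2 + 2*N*(q - 1)" .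
  have G: "2 + 2*N*(q - 1) > 2" using N0 q1 by simp
  have qq: "sqrt (1 + 4*ap^2*bp^2/(ap^2+bp^2)^2) = q" unfolding q_def t2 ..
  show ?thesis unfolding qq using F[unfolded N_def] G[unfolded N_def] by simp
qed


lemma Re_sgn: "(Z::complex) \<noteq> 0 \<Longrightarrow> Re (Z * cnj (sgn Z)) = cmod Z"
  by (simp add: sgn_div_norm complex_norm_square[symmetric] divide_inverse power2_eq_square flip: mult.assoc)

lemma final_alg:
  fixes N P :: real
  assumes "N > 0" "P > 0"
  defines "x \<equiv> 2*P/N"
  defines "s \<equiv> sqrt (1 + x^2)"
  shows "(1/s)^2 + (x/s)^2 = 1" "0 < 1/s + 1" "2 - 2*N + 2*(1/s)*N + 4*(x/s)*P > 2"
proof -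
  have s0: "s > 0" unfolding s_def by (simp add: add_pos_nonneg)
  have s2: "s^2 = 1 + x^2" unfolding s_def by simp
  have x0: "x > 0" unfolding x_def using assms by simp
  have s1: "s > 1" unfolding s_def using x0 by simp
  have "1 + x^2 > 0" by (simp add: add_pos_nonneg)
  then show "(1/s)^2 + (x/s)^2 = 1" using s0 s2 by (simp add: power_divide add_divide_distrib[symmetric])
  show "0 < 1/s + 1" using s0 by (simp add: add_pos_pos)
  have e: "4*x*P = 2*N*x^2" unfolding x_def using assms by (simp add: power2_eq_square field_simps)
  have "2 - 2*N + 2*(1/s)*N + 4*(x/s)*P = 2 - 2*N + (2*N + 4*x*P)/s" by (simp add: field_simps add_divide_distrib)
  also have "\<dots> = 2 - 2*N + 2*N*(1 + x^2)/s" unfolding e by (simp add: algebra_simps)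
  also have "\<dots> = 2 - 2*N + 2*N*s" using s0 unfolding s2[symmetric] by (simp add: power2_eq_square)
  also have "\<dots> = 2 + 2*N*(s - 1)" by (simp add: algebra_simps)
  also have "\<dots> > 2" using assms s1 by simp
  finally show "2 - 2*N + 2*(1/s)*N + 4*(x/s)*P > 2" .
qed

lemma part1:
  assumes "r < d" "(\<Sum>i<d. (cmod (\<alpha> i))\<^sup>2) = 1" "i < d" "j < d" "i \<noteq> j" "\<alpha> i \<noteq> 0" "\<alpha> j \<noteq> 0"
  shows "\<exists>A0 A1 B0 B1. valid_meas2 d A0 \<and> valid_meas2 d A1 \<and> valid_meas2 d B0
            \<and> valid_meas2 d B1 \<and> chsh d (psi_r d r \<alpha>) A0 A1 B0 B1 > 2"
proof -
  define Z where "Z = cnj (\<alpha> i * \<alpha> i) * (\<alpha> j * \<alpha> j)"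
  have Z0: "Z \<noteq> 0" using assms by (simp add: Z_def)
  define \<omega> where "\<omega> = sgn Z"
  have om: "cmod \<omega> = 1" using Z0 by (simp add: \<omega>_def norm_sgn)
  define N where "N = (cmod (\<alpha> i))^4 + (cmod (\<alpha> j))^4"
  have N0: "N > 0" using assms(6) unfolding N_def by (simp add: add_pos_nonneg)
  define P where "P = cmod Z"
  have P0: "P > 0" using Z0 by (simp add: P_def)
  define x where "x = 2*P/N"
  define s where "s = sqrt (1 + x^2)"
  note fa = final_alg[OF N0 P0, folded x_def, folded s_def]
  have RZ: "Re (cnj (\<alpha> i * \<alpha> i) * (\<alpha> j * \<alpha> j) * cnj \<omega>) = P"
    using Re_sgn[OF Z0] unfolding Z_def[symmetric] \<omega>_def P_def .
  note V = valid_gen[OF assms(3,4,1,5) fa(1) fa(2) om]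
  note Ch = chsh_gen[OF assms(3,4,1,5,2) fa(1) fa(2) om, unfolded RZ N_def[symmetric]]
  show ?thesis using V Ch fa(3) by metis
qed

theorem mainTheorem4:
  fixes d r :: nat and \<alpha> :: "nat \<Rightarrow> complex"
  assumes "2 \<le> d" and "r < d"
    and "(\<Sum>i<d. (cmod (\<alpha> i))\<^sup>2) = 1"
    and "\<exists>i j. i < d \<and> j < d \<and> i \<noteq> j \<and> \<alpha> i \<noteq> 0 \<and> \<alpha> j \<noteq> 0"
  shows "(\<exists>A0 A1 B0 B1. valid_meas2 d A0 \<and> valid_meas2 d A1 \<and> valid_meas2 d B0
            \<and> valid_meas2 d B1 \<and> chsh d (psi_r d r \<alpha>) A0 A1 B0 B1 > 2)
    \<and> (\<forall>a0 a1 \<theta>::real. 0 < a0 \<and> 0 < a1 \<and> \<alpha> 0 = complex_of_real a0 \<and> \<alpha> 1 = complex_of_real a1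
        \<and> 0 < \<theta> \<and> \<theta> \<le> pi / 2
        \<and> tan \<theta> = 2 * a0\<^sup>2 * a1\<^sup>2 / ((a0\<^sup>2)\<^sup>2 + (a1\<^sup>2)\<^sup>2) \<longrightarrow>
       (let ap = a0\<^sup>2; bp = a1\<^sup>2;
            up = ket (0, r); dn = ket (1, (1 + r) mod d);
            a0op = proj up;
            a1op = opscale (1/2) (proj (\<lambda>x. up x + dn x));
            upm = (\<lambda>x. complex_of_real (cos \<theta> + 1) * up x + complex_of_real (sin \<theta>) * dn x);
            umm = (\<lambda>x. complex_of_real (cos \<theta> + 1) * up x - complex_of_real (sin \<theta>) * dn x);
            b0op = opscale (1 / (2 * cos \<theta> + 2)) (proj upm);
            b1op = opscale (1 / (2 * cos \<theta> + 2)) (proj umm);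
            A0 = (a0op, opsub (idop d) a0op); A1 = (a1op, opsub (idop d) a1op);
            B0 = (b0op, opsub (idop d) b0op); B1 = (b1op, opsub (idop d) b1op);
            F = chsh d (psi_r d r \<alpha>) A0 A1 B0 B1
        in valid_meas2 d A0 \<and> valid_meas2 d A1 \<and> valid_meas2 d B0 \<and> valid_meas2 d B1
           \<and> F = 2 + 2 * (ap\<^sup>2 + bp\<^sup>2)
                   * (sqrt (1 + 4 * ap\<^sup>2 * bp\<^sup>2 / (ap\<^sup>2 + bp\<^sup>2)\<^sup>2) - 1)
           \<and> F > 2))"
proof -
  obtain i j where ij: "i < d" "j < d" "i \<noteq> j" "\<alpha> i \<noteq> 0" "\<alpha> j \<noteq> 0" using assms(4) by blast
  have d1: "0 < d" "1 < d" using assms(1) by auto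
  have P1: "\<exists>A0 A1 B0 B1. valid_meas2 d A0 \<and> valid_meas2 d A1 \<and> valid_meas2 d B0
            \<and> valid_meas2 d B1 \<and> chsh d (psi_r d r \<alpha>) A0 A1 B0 B1 > 2"
    using part1[OF assms(2,3) ij] .
  moreover have "\<forall>a0 a1 \<theta>::real. 0 < a0 \<and> 0 < a1 \<and> \<alpha> 0 = complex_of_real a0 \<and> \<alpha> 1 = complex_of_real a1
        \<and> 0 < \<theta> \<and> \<theta> \<le> pi / 2
        \<and> tan \<theta> = 2 * a0\<^sup>2 * a1\<^sup>2 / ((a0\<^sup>2)\<^sup>2 + (a1\<^sup>2)\<^sup>2) \<longrightarrow>
       (let ap = a0\<^sup>2; bp = a1\<^sup>2;
            up = ket (0, r); dn = ket (1, (1 + r) mod d);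
            a0op = proj up;
            a1op = opscale (1/2) (proj (\<lambda>x. up x + dn x));
            upm = (\<lambda>x. complex_of_real (cos \<theta> + 1) * up x + complex_of_real (sin \<theta>) * dn x);
            umm = (\<lambda>x. complex_of_real (cos \<theta> + 1) * up x - complex_of_real (sin \<theta>) * dn x);
            b0op = opscale (1 / (2 * cos \<theta> + 2)) (proj upm);
            b1op = opscale (1 / (2 * cos \<theta> + 2)) (proj umm);
            A0 = (a0op, opsub (idop d) a0op); A1 = (a1op, opsub (idop d) a1op);
            B0 = (b0op, opsub (idop d) b0op); B1 = (b1op, opsub (idop d) b1op);
            F = chsh d (psi_r d r \<alpha>) A0 A1 B0 B1
        in valid_meas2 d A0 \<and> valid_meas2 d A1 \<and> valid_meas2 d B0 \<and> valid_meas2 d B1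
           \<and> F = 2 + 2 * (ap\<^sup>2 + bp\<^sup>2)
                   * (sqrt (1 + 4 * ap\<^sup>2 * bp\<^sup>2 / (ap\<^sup>2 + bp\<^sup>2)\<^sup>2) - 1)
           \<and> F > 2)"
  proof (intro allI impI)
    fix a0 a1 \<theta> :: real
    assume H: "0 < a0 \<and> 0 < a1 \<and> \<alpha> 0 = complex_of_real a0 \<and> \<alpha> 1 = complex_of_real a1
        \<and> 0 < \<theta> \<and> \<theta> \<le> pi / 2
        \<and> tan \<theta> = 2 * a0\<^sup>2 * a1\<^sup>2 / ((a0\<^sup>2)\<^sup>2 + (a1\<^sup>2)\<^sup>2)"
    have cge: "cos \<theta> \<ge> 0" using H by (intro cos_ge_zero) auto
    have CS: "(cos \<theta>)\<^sup>2 + (sin \<theta>)\<^sup>2 = 1" by simp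
    have C1: "0 < cos \<theta> + 1" using cge by simp
    have om: "cmod (1::complex) = 1" by simp
    have ap0: "0 < a0^2" "0 < a1^2" using H by auto
    have eA0: "proj (ket (0, r)) = proj (vec2 d r 0 1 1 0)"
      using assms(2) by (simp add: vec2_def)
    have eA1: "opscale (1/2) (proj (\<lambda>x. ket (0, r) x + ket (1, (1 + r) mod d) x))
        = proj (vec2 d r 0 1 (complex_of_real (sqrt (1/2))) (complex_of_real (sqrt (1/2))))"
    proof -
      have "(\<lambda>x. ket (0, r) x + ket (1, (1 + r) mod d) x) = vec2 d r 0 1 1 1"
        using assms(2) by (simp add: vec2_def)
      then show ?thesis using opscale_vec2[of "1/2" d r 0 1 1 1] by simp
    qed
    have eB0: "opscale (1 / (2 * cos \<theta> + 2)) (proj (\<lambda>x. complex_of_real (cos \<theta> + 1) * ket (0, r) x + complex_of_real (sin \<theta>) * ket (1, (1 + r) mod d) x))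
        = proj (vec2 d r 0 1 (complex_of_real (sqrt (1 / (2 * cos \<theta> + 2)) * (cos \<theta> + 1))) (complex_of_real (sqrt (1 / (2 * cos \<theta> + 2)) * sin \<theta>) * 1))"
    proof -
      have "(\<lambda>x. complex_of_real (cos \<theta> + 1) * ket (0, r) x + complex_of_real (sin \<theta>) * ket (1, (1 + r) mod d) x)
          = vec2 d r 0 1 (complex_of_real (cos \<theta> + 1)) (complex_of_real (sin \<theta>))"
        using assms(2) by (simp add: vec2_def)
      then show ?thesis using opscale_vec2[of "1 / (2 * cos \<theta> + 2)" d r 0 1 "complex_of_real (cos \<theta> + 1)" "complex_of_real (sin \<theta>)"] C1
        by simp
    qed
    have eB1: "opscale (1 / (2 * cos \<theta> + 2)) (proj (\<lambda>x. complex_of_real (cos \<theta> + 1) * ket (0, r) x - complex_of_real (sin \<theta>) * ket (1, (1 + r) mod d) x))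
        = proj (vec2 d r 0 1 (complex_of_real (sqrt (1 / (2 * cos \<theta> + 2)) * (cos \<theta> + 1))) (- (complex_of_real (sqrt (1 / (2 * cos \<theta> + 2)) * sin \<theta>) * 1)))"
    proof -
      have "(\<lambda>x. complex_of_real (cos \<theta> + 1) * ket (0, r) x - complex_of_real (sin \<theta>) * ket (1, (1 + r) mod d) x)
          = vec2 d r 0 1 (complex_of_real (cos \<theta> + 1)) (- complex_of_real (sin \<theta>))"
        using assms(2) by (simp add: vec2_def)
      then show ?thesis using opscale_vec2[of "1 / (2 * cos \<theta> + 2)" d r 0 1 "complex_of_real (cos \<theta> + 1)" "- complex_of_real (sin \<theta>)"] C1
        by simp
    qed
    note V = valid_gen[OF d1(1) d1(2) assms(2) zero_neq_one CS C1 om]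
    note Ch = chsh_gen[OF d1(1) d1(2) assms(2) zero_neq_one assms(3) CS C1 om]
    have val: "2 - 2 * ((cmod (\<alpha> 0))^4 + (cmod (\<alpha> 1))^4) + 2 * cos \<theta> * ((cmod (\<alpha> 0))^4 + (cmod (\<alpha> 1))^4)
       + 4 * sin \<theta> * Re (cnj (\<alpha> 0 * \<alpha> 0) * (\<alpha> 1 * \<alpha> 1) * cnj 1)
       = 2 - 2*((a0^2)^2+(a1^2)^2) + 2*cos \<theta>*((a0^2)^2+(a1^2)^2) + 4*sin \<theta>*(a0^2*a1^2)"
    proof -
      have p4: "\<And>x::real. x^4 = x*x*(x*x)" by (simp add: eval_nat_numeral)
      show ?thesis using H by (simp add: power2_eq_square p4)
    qed
    have th: "0 < \<theta>" "\<theta> \<le> pi/2" "tan \<theta> = 2 * a0\<^sup>2 * a1\<^sup>2 / ((a0\<^sup>2)\<^sup>2 + (a1\<^sup>2)\<^sup>2)" using H by auto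
    note T = trig_part[OF ap0(1) ap0(2) th]
    show "let ap = a0\<^sup>2; bp = a1\<^sup>2;
            up = ket (0, r); dn = ket (1, (1 + r) mod d);
            a0op = proj up;
            a1op = opscale (1/2) (proj (\<lambda>x. up x + dn x));
            upm = (\<lambda>x. complex_of_real (cos \<theta> + 1) * up x + complex_of_real (sin \<theta>) * dn x);
            umm = (\<lambda>x. complex_of_real (cos \<theta> + 1) * up x - complex_of_real (sin \<theta>) * dn x);
            b0op = opscale (1 / (2 * cos \<theta> + 2)) (proj upm);
            b1op = opscale (1 / (2 * cos \<theta> + 2)) (proj umm);
            A0 = (a0op, opsub (idop d) a0op); A1 = (a1op, opsub (idop d) a1op);
            B0 = (b0op, opsub (idop d) b0op); B1 = (b1op, opsub (idop d) b1op);
            F = chsh d (psi_r d r \<alpha>) A0 A1 B0 B1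
        in valid_meas2 d A0 \<and> valid_meas2 d A1 \<and> valid_meas2 d B0 \<and> valid_meas2 d B1
           \<and> F = 2 + 2 * (ap\<^sup>2 + bp\<^sup>2)
                   * (sqrt (1 + 4 * ap\<^sup>2 * bp\<^sup>2 / (ap\<^sup>2 + bp\<^sup>2)\<^sup>2) - 1)
           \<and> F > 2"
      apply (simp only: Let_def eA0 eA1 eB0 eB1)
      apply (intro conjI)
      using V apply blast
      using V apply blast
      using V apply blast
      using V apply blast
      apply (simp only: Ch val conjunct1[OF T])
      apply (simp only: Ch val conjunct1[OF T])
      by (rule conjunct2[OF T])
  qed
  ultimately show ?thesis by blast
qed

end
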